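(* Let $U\in\widetilde{\mathcal V}^r$, let $\Phi$ be a $q\times q$ matrix operator acting on $\mathcal B^q$, let $K_0\in\mathcal B^q$ and set $K_k=\Phi^kK_0$ for $k\ge0$. Suppose that to each $X\in\mathcal B^q$ there is assigned $\Omega(X)\in\widetilde{\mathcal V}^r$ satisfying the characteristic operator equation \[ (E\Omega(X))U-U\Omega(X)=U'[\Phi X]-\lambda U'[X]. \] Let $V_0,W_0\in\widetilde{\mathcal V}^r$ and $\rho_0\in\mathcal B^q$ satisfy \[ (EV_0)U-UV_0=U'[K_0],\qquad (EW_0)U-UW_0=U'[\rho_0]+\lambda U_\lambda . \] Define $\rho_l=\Phi^l\rho_0$ for $l\ge1$ and \[ V_k=\lambda^kV_0+\sum_{i=1}^k\lambda^{k-i}\Omega(K_{i-1}),\qquad W_l=\lambda^lW_0+\sum_{j=1}^l\lambda^{l-j}\Omega(\rho_{j-1}),\qquad k,l\ge1 . \] Then for all $k,l\ge0$, \[ (EV_k)U-UV_k=U'[K_k],\qquad (EW_l)U-UW_l=U'[\rho_l]+\lambda^{l+1}U_\lambda . \] Consequently $u_t=K_k$ and $u_t=\rho_l$ have the isospectral ($\lambda_t=0$) and nonisospectral ($\lambda_t=\lambda^{l+1}$) discrete zero curvature representations $U_t=(EV_k)U-UV_k$ and $U_t=(EW_l)U-UW_l$, respectively. The same conclusion holds in the following variant: $J,M$ are $q\times q$ matrix operators, $K_k=JG_k=MG_{k-1}$ ($k\ge0$) with $G_{k-1}\in\mathcal B^q$ ($k\ge0$), $\rho_0=J\gamma_0$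 and $\rho_l=J\gamma_l=M\gamma_{l-1}$ ($l\ge1$) with $\gamma_l\in\mathcal B^q$, $\Omega$ replaced by $\Omega_J(G)\in\widetilde{\mathcal V}^r$ satisfying $(E\Omega_J(G))U-U\Omega_J(G)=U'[MG]-\lambda U'[JG]$ for each $G\in\mathcal B^q$, and $V_k=\lambda^kV_0+\sum_{i=1}^k\lambda^{k-i}\Omega_J(G_{i-1})$, $W_l=\lambda^lW_0+\sum_{j=1}^l\lambda^{l-j}\Omega_J(\gamma_{j-1})$.
   Context: $u=(u_1,\dots,u_q)^T$, $u_i(t,n)$ real functions on $\mathbb R\times\mathbb Z$; $\mathcal B$ = real functions $P(t,n,u)$ smooth in $t,n$ and $C^\infty$-Gateaux differentiable in $u$; $\mathcal B^q$ = $q$-vectors over $\mathcal B$; $\widetilde{\mathcal V}^r$ = $r\times r$ matrices with entries in $\mathcal B$ depending smoothly on a real parameter $\lambda$; $U_\lambda=\partial U/\partial\lambda$. $E$ is the shift operator $n\mapsto n+1$, acting on matrices entrywise on all $n$-dependence (including through $u$). Gateaux derivative $X'[S]=\frac{d}{d\varepsilon}|_{\varepsilon=0}X(u+\varepsilon S)$, linear in $S$. The discrete spectral problem is $E\phi=U\phi$, $\phi_t=V\phi$, whose compatibility condition is the discrete zero curvature equation $U_t=(EV)U-UV$, with $U_t=U'[u_t]+\lambda_tU_\lambda$. *)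

theory Defs
  imports "HOL-Analysis.Analysis"
begin

text \<open>A field configuration u = (u_1,...,u_q): u t n is the vector (u_i(t,n))_i.\<close>
type_synonym 'q fld = "real \<Rightarrow> int \<Rightarrow> real^'q"

text \<open>Elements of B^q: X(t,n,u), written X u t n (may depend on the whole field u,
  in particular on u(t,n) and its shifts).\<close>
type_synonym 'q bvec = "'q fld \<Rightarrow> real \<Rightarrow> int \<Rightarrow> real^'q"

text \<open>Elements of the r x r matrix space over B depending on the spectral parameter lambda:
  M lam u t n.\<close>
type_synonym ('q,'r) vmat = "real \<Rightarrow> 'q fld \<Rightarrow> real \<Rightarrow> int \<Rightarrow> real^'r^'r"

definition shiftE :: "('q::finite,'r::finite) vmat \<Rightarrow> ('q,'r) vmat" where
  "shiftE M = (\<lambda>lam u t n. M lam u t (n + 1))"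

definition zc :: "('q::finite,'r::finite) vmat \<Rightarrow> ('q,'r) vmat \<Rightarrow> ('q,'r) vmat" where
  "zc V U = (\<lambda>lam u t n. shiftE V lam u t n ** U lam u t n - U lam u t n ** V lam u t n)"

definition gateaux :: "('q::finite,'r::finite) vmat \<Rightarrow> 'q bvec \<Rightarrow> ('q,'r) vmat" where
  "gateaux U S = (\<lambda>lam u t n. \<chi> i j.
     deriv (\<lambda>eps. U lam (\<lambda>t' n'. u t' n' + eps *\<^sub>R S u t' n') t n $ i $ j) 0)"

definition Ulam :: "('q::finite,'r::finite) vmat \<Rightarrow> ('q,'r) vmat" where
  "Ulam U = (\<lambda>lam u t n. \<chi> i j. deriv (\<lambda>mu. U mu u t n $ i $ j) lam)"

definition Ut :: "('q::finite,'r::finite) vmat \<Rightarrow> 'q bvec \<Rightarrow> (real \<Rightarrow> real) \<Rightarrow> ('q,'r) vmat" where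
  "Ut U ut lt = (\<lambda>lam u t n. gateaux U ut lam u t n + lt lam *\<^sub>R Ulam U lam u t n)"

definition lamsum :: "('q::finite,'r::finite) vmat \<Rightarrow> ('q bvec \<Rightarrow> ('q,'r) vmat) \<Rightarrow> (nat \<Rightarrow> 'q bvec) \<Rightarrow> nat \<Rightarrow> ('q,'r) vmat" where
  "lamsum A0 Om X k = (\<lambda>lam u t n. lam ^ k *\<^sub>R A0 lam u t n
      + (\<Sum>i = 1..k. lam ^ (k - i) *\<^sub>R Om (X (i - 1)) lam u t n))"

end

theory Submission
  imports Defs
begin

lemma mm_ladd: "((A::real^'n^'m) + B) ** (C::real^'p^'n) = A ** C + B ** C"
  by (simp add: vec_eq_iff matrix_matrix_mult_def sum.distrib algebra_simps)

lemma mm_radd: "(C::real^'n^'m) ** ((A::real^'p^'n) + B) = C ** A + C ** B"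
  by (simp add: vec_eq_iff matrix_matrix_mult_def sum.distrib algebra_simps)

lemma mm_lsc: "(c *\<^sub>R (A::real^'n^'m)) ** (C::real^'p^'n) = c *\<^sub>R (A ** C)"
  by (simp add: vec_eq_iff matrix_matrix_mult_def sum_distrib_left algebra_simps)

lemma mm_rsc: "(C::real^'n^'m) ** (c *\<^sub>R (A::real^'p^'n)) = c *\<^sub>R (C ** A)"
  by (simp add: vec_eq_iff matrix_matrix_mult_def sum_distrib_left algebra_simps)

lemma zc_lin: "zc (\<lambda>lam u t n. lam *\<^sub>R A lam u t n + B lam u t n) U
   = (\<lambda>lam u t n. lam *\<^sub>R zc A U lam u t n + zc B U lam u t n)"
  by (simp add: zc_def shiftE_def mm_ladd mm_radd mm_lsc mm_rsc fun_eq_iff algebra_simps)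

lemma lamsum_0: "lamsum A Om X 0 = A"
  by (simp add: lamsum_def)

lemma lamsum_Suc: "lamsum A Om X (Suc k) =
   (\<lambda>lam u t n. lam *\<^sub>R lamsum A Om X k lam u t n + Om (X k) lam u t n)"
proof -
  have "\<And>lam u t n. (\<Sum>i = 1..Suc k. lam ^ (Suc k - i) *\<^sub>R Om (X (i - 1)) lam u t n)
     = lam *\<^sub>R (\<Sum>i = 1..k. lam ^ (k - i) *\<^sub>R Om (X (i - 1)) lam u t n) + Om (X k) lam u t n"
  proof -
    fix lam u t n
    have "(\<Sum>i = 1..k. lam ^ (Suc k - i) *\<^sub>R Om (X (i - 1)) lam u t n)
        = (\<Sum>i = 1..k. lam *\<^sub>R (lam ^ (k - i) *\<^sub>R Om (X (i - 1)) lam u t n))"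
      by (rule sum.cong) (auto simp: Suc_diff_le)
    then show "?thesis lam u t n"
      by (simp add: scaleR_sum_right)
  qed
  then show ?thesis
    by (simp add: lamsum_def fun_eq_iff scaleR_add_right)
qed

lemma main_rec:
  assumes "\<And>k. zc (Om (X k)) U = (\<lambda>lam u t n. F (Suc k) lam u t n - lam *\<^sub>R F k lam u t n)"
    and "zc A U = F 0"
  shows "zc (lamsum A Om X k) U = F k"
proof (induction k)
  case 0 then show ?case using assms(2) by (simp add: lamsum_0)
next
  case (Suc k)
  show ?case
    unfolding lamsum_Suc zc_lin Suc assms(1) by (simp add: fun_eq_iff)
qed

theorem theorem3:
  shows "(\<forall>(U :: ('q::finite,'r::finite) vmat) (Phi :: 'q bvec \<Rightarrow> 'q bvec) (K0 :: 'q bvec)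
            (Omega :: 'q bvec \<Rightarrow> ('q,'r) vmat) (V0 :: ('q,'r) vmat) (W0 :: ('q,'r) vmat) (rho0 :: 'q bvec).
      (\<forall>X. zc (Omega X) U = (\<lambda>lam u t n. gateaux U (Phi X) lam u t n - lam *\<^sub>R gateaux U X lam u t n))
      \<and> zc V0 U = gateaux U K0
      \<and> zc W0 U = (\<lambda>lam u t n. gateaux U rho0 lam u t n + lam *\<^sub>R Ulam U lam u t n)
      \<longrightarrow>
      (let K = (\<lambda>k. (Phi ^^ k) K0); rho = (\<lambda>l. (Phi ^^ l) rho0);
           V = lamsum V0 Omega K; W = lamsum W0 Omega rho in
        (\<forall>k. zc (V k) U = gateaux U (K k))
        \<and> (\<forall>l. zc (W l) U = (\<lambda>lam u t n. gateaux U (rho l) lam u t n + lam ^ (l + 1) *\<^sub>R Ulam U lam u t n))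
        \<and> (\<forall>k. Ut U (K k) (\<lambda>lam. 0) = zc (V k) U)
        \<and> (\<forall>l. Ut U (rho l) (\<lambda>lam. lam ^ (l + 1)) = zc (W l) U)))
   \<and>
   (\<forall>(U :: ('q,'r) vmat) (J :: 'q bvec \<Rightarrow> 'q bvec) (M :: 'q bvec \<Rightarrow> 'q bvec)
            (K :: nat \<Rightarrow> 'q bvec) (G :: int \<Rightarrow> 'q bvec) (rho :: nat \<Rightarrow> 'q bvec) (gamma :: nat \<Rightarrow> 'q bvec)
            (OmegaJ :: 'q bvec \<Rightarrow> ('q,'r) vmat) (V0 :: ('q,'r) vmat) (W0 :: ('q,'r) vmat).
      (\<forall>k. K k = J (G (int k)) \<and> K k = M (G (int k - 1)))
      \<and> rho 0 = J (gamma 0)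
      \<and> (\<forall>l\<ge>1. rho l = J (gamma l) \<and> rho l = M (gamma (l - 1)))
      \<and> (\<forall>X. zc (OmegaJ X) U = (\<lambda>lam u t n. gateaux U (M X) lam u t n - lam *\<^sub>R gateaux U (J X) lam u t n))
      \<and> zc V0 U = gateaux U (K 0)
      \<and> zc W0 U = (\<lambda>lam u t n. gateaux U (rho 0) lam u t n + lam *\<^sub>R Ulam U lam u t n)
      \<longrightarrow>
      (let V = lamsum V0 OmegaJ (\<lambda>i. G (int i)); W = lamsum W0 OmegaJ gamma in
        (\<forall>k. zc (V k) U = gateaux U (K k))
        \<and> (\<forall>l. zc (W l) U = (\<lambda>lam u t n. gateaux U (rho l) lam u t n + lam ^ (l + 1) *\<^sub>R Ulam U lam u t n))
        \<and> (\<forall>k. Ut U (K k) (\<lambda>lam. 0) = zc (V k) U)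
        \<and> (\<forall>l. Ut U (rho l) (\<lambda>lam. lam ^ (l + 1)) = zc (W l) U)))"
  apply (rule conjI; intro allI impI; unfold Let_def)
  subgoal premises h for U Phi K0 Omega V0 W0 rho0
  proof -
  define K where "K = (\<lambda>k. (Phi ^^ k) K0)"
  define rho where "rho = (\<lambda>l. (Phi ^^ l) rho0)"
  have V: "zc (lamsum V0 Omega K k) U = gateaux U (K k)" for k
    by (rule main_rec[where F="\<lambda>k. gateaux U (K k)"]) (use h in \<open>auto simp: K_def\<close>)
  have W: "zc (lamsum W0 Omega rho l) U = (\<lambda>lam u t n. gateaux U (rho l) lam u t n + lam ^ (l + 1) *\<^sub>R Ulam U lam u t n)" for l
    by (rule main_rec[where F="\<lambda>l. (\<lambda>lam u t n. gateaux U (rho l) lam u t n + lam ^ (l + 1) *\<^sub>R Ulam U lam u t n)"])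
      (use h in \<open>auto simp: rho_def fun_eq_iff algebra_simps\<close>)
  show ?thesis
    unfolding K_def[symmetric] rho_def[symmetric] using V W
    by (simp add: Ut_def K_def rho_def)
  qed
  subgoal premises h for U J M K G rho gamma OmegaJ V0 W0
  proof -
  have KJ: "J (G (int k)) = K k" for k using h by auto
  have KM: "M (G (int k)) = K (Suc k)" for k
    proof -
    have "int (Suc k) - 1 = int k" by simp
    then show ?thesis using h[THEN conjunct1, rule_format, of "Suc k"] by metis
  qed
  have rJ: "J (gamma l) = rho l" for l using h by (cases l) auto
  have rM: "M (gamma l) = rho (Suc l)" for l
    using h[THEN conjunct2, THEN conjunct2, THEN conjunct1, rule_format, of "Suc l"] by (metis diff_Suc_1 le_add1 plus_1_eq_Suc)
  have V: "zc (lamsum V0 OmegaJ (\<lambda>i. G (int i)) k) U = gateaux U (K k)" for k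
    by (rule main_rec[where F="\<lambda>k. gateaux U (K k)"]) (use h KJ KM in \<open>auto\<close>)
  have W: "zc (lamsum W0 OmegaJ gamma l) U = (\<lambda>lam u t n. gateaux U (rho l) lam u t n + lam ^ (l + 1) *\<^sub>R Ulam U lam u t n)" for l
  proof (rule main_rec[where F="\<lambda>l. (\<lambda>lam u t n. gateaux U (rho l) lam u t n + lam ^ (l + 1) *\<^sub>R Ulam U lam u t n)"])
    fix k
    have "zc (OmegaJ (gamma k)) U = (\<lambda>lam u t n. gateaux U (M (gamma k)) lam u t n - lam *\<^sub>R gateaux U (J (gamma k)) lam u t n)"
      using h by blast
    then show "zc (OmegaJ (gamma k)) U = (\<lambda>lam u t n. (gateaux U (rho (Suc k)) lam u t n + lam ^ (Suc k + 1) *\<^sub>R Ulam U lam u t n)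
         - lam *\<^sub>R (gateaux U (rho k) lam u t n + lam ^ (k + 1) *\<^sub>R Ulam U lam u t n))"
      unfolding rJ rM by (simp add: fun_eq_iff algebra_simps)
  next
    show "zc W0 U = (\<lambda>lam u t n. gateaux U (rho 0) lam u t n + lam ^ (0 + 1) *\<^sub>R Ulam U lam u t n)"
      using h by simp
  qed
  show ?thesis
    using V W by (simp add: Ut_def)
  qed
  done

end
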